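(* Let $f \in L^\infty(0,L)$. Let $u_0 \in V$ satisfy $a_0(u_0,v) = \int_0^L f v\,dx$ for all $v \in V$, and for $n \ge 1$ let $u_n \in V$ satisfy $\sum_{j=0}^{n} a_j(u_{n-j}, v) = 0$ for all $v \in V$. Then for every $m \ge 0$ there is a constant $\tilde C_m$, depending only on $m$ and $L$, such that $$|u_m|_{H^1} \le \tilde C_m\, \|\psi\|_\infty^m\, \|f\|_\infty.$$
   Context: Let $L>0$ and let $\kappa:(0,L)\to\mathbb{R}$ be measurable with $0<\kappa_{\min}\le \kappa(x)\le \kappa_{\max}$ for a.e. $x$; set $\psi = \log \kappa \in L^\infty(0,L)$, with $\|\cdot\|_\infty$ the essential supremum norm. $V = \{ v \in H^1(0,L) : v(0) = 0\}$. For integers $j \ge 0$ and $u,v \in V$, define $a_j(u,v) = \frac{1}{j!}\int_0^L \psi(x)^j\, u'(x)\, v'(x)\,dx$. The $H^1$-seminorm is $|v|_{H^1} = \left(\int_0^L |v'|^2\,dx\right)^{1/2}$. *)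

theory Defs
  imports "HOL-Analysis.Analysis" "HOL-Probability.Essential_Supremum"
begin

abbreviation Iv :: "real \<Rightarrow> real measure" where
  "Iv L \<equiv> restrict_space lborel {0<..<L}"

definition Linf_norm :: "real \<Rightarrow> (real \<Rightarrow> real) \<Rightarrow> real" where
  "Linf_norm L f = real_of_ereal (esssup (Iv L) (\<lambda>x. ereal \<bar>f x\<bar>))"

definition in_Linf :: "real \<Rightarrow> (real \<Rightarrow> real) \<Rightarrow> bool" where
  "in_Linf L f \<longleftrightarrow> f \<in> borel_measurable (Iv L) \<and> (\<exists>B. AE x in Iv L. \<bar>f x\<bar> \<le> B)"

text \<open>inV L v g: v belongs to V = {v in H^1(0,L), v(0)=0} with weak derivative g,
  i.e. g is in L^2(0,L) and v(x) = integral from 0 to x of g, for x in [0,L]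
  (the absolutely continuous representative of v).\<close>
definition inV :: "real \<Rightarrow> (real \<Rightarrow> real) \<Rightarrow> (real \<Rightarrow> real) \<Rightarrow> bool" where
  "inV L v g \<longleftrightarrow> g \<in> borel_measurable (Iv L)
     \<and> set_integrable lborel {0<..<L} (\<lambda>x. (g x)\<^sup>2)
     \<and> (\<forall>x\<in>{0..L}. v x = (LBINT t=0..x. g t))"

text \<open>a_j(u,v) expressed via the derivatives du = u', dv = v'.\<close>
definition aj :: "real \<Rightarrow> (real \<Rightarrow> real) \<Rightarrow> nat \<Rightarrow> (real \<Rightarrow> real) \<Rightarrow> (real \<Rightarrow> real) \<Rightarrow> real" where
  "aj L \<psi> j du dv = (1 / fact j) * (LBINT x=0..L. (\<psi> x) ^ j * du x * dv x)"

definition H1_semi :: "real \<Rightarrow> (real \<Rightarrow> real) \<Rightarrow> real" where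
  "H1_semi L du = sqrt (LBINT x=0..L. (du x)\<^sup>2)"

end

theory Submission
  imports Defs
begin

lemma CS:
  fixes M :: "'a measure" and a b :: "'a \<Rightarrow> real"
  assumes am: "a \<in> borel_measurable M" and bm: "b \<in> borel_measurable M"
    and ai: "integrable M (\<lambda>x. (a x)\<^sup>2)" and bi: "integrable M (\<lambda>x. (b x)\<^sup>2)"
  shows "integrable M (\<lambda>x. \<bar>a x * b x\<bar>)"
    and "(\<integral>x. \<bar>a x * b x\<bar> \<partial>M) \<le> sqrt (\<integral>x. (a x)\<^sup>2 \<partial>M) * sqrt (\<integral>x. (b x)\<^sup>2 \<partial>M)"
proof -
  have pt: "\<And>x t. t > 0 \<Longrightarrow> \<bar>a x * b x\<bar> \<le> (t * (a x)\<^sup>2 + (b x)\<^sup>2 / t) / 2"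
  proof -
    fix x and t :: real assume t: "t > 0"
    have "0 \<le> (t * \<bar>a x\<bar> - \<bar>b x\<bar>)\<^sup>2" by simp
    hence "2 * t * \<bar>a x * b x\<bar> \<le> t * (t * (a x)\<^sup>2) + (b x)\<^sup>2"
      by (simp add: power2_eq_square algebra_simps abs_mult)
    hence "\<bar>a x * b x\<bar> \<le> (t * (t * (a x)\<^sup>2) + (b x)\<^sup>2) / (2 * t)"
      using t by (simp add: field_simps)
    also have "\<dots> = (t * (a x)\<^sup>2 + (b x)\<^sup>2 / t) / 2" using t by (simp add: field_simps)
    finally show "\<bar>a x * b x\<bar> \<le> (t * (a x)\<^sup>2 + (b x)\<^sup>2 / t) / 2" .
  qed
  show I: "integrable M (\<lambda>x. \<bar>a x * b x\<bar>)"
    apply (rule Bochner_Integration.integrable_bound[where f="\<lambda>x. ((a x)\<^sup>2 + (b x)\<^sup>2) / 2"])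
    using ai bi apply simp
    using am bm apply measurable
    using pt[of 1] by auto
  define A where "A = (\<integral>x. (a x)\<^sup>2 \<partial>M)"
  define B where "B = (\<integral>x. (b x)\<^sup>2 \<partial>M)"
  have A0: "A \<ge> 0" "B \<ge> 0" unfolding A_def B_def by auto
  have bd: "(\<integral>x. \<bar>a x * b x\<bar> \<partial>M) \<le> (t * A + B / t) / 2" if t: "t > 0" for t
  proof -
    have "(\<integral>x. \<bar>a x * b x\<bar> \<partial>M) \<le> (\<integral>x. (t * (a x)\<^sup>2 + (b x)\<^sup>2 / t) / 2 \<partial>M)"
      apply (rule integral_mono[OF I])
      using ai bi apply simp
      using pt t by auto
    also have "\<dots> = (t * A + B / t) / 2" unfolding A_def B_def using ai bi by simp
    finally show ?thesis .
  qed
  show "(\<integral>x. \<bar>a x * b x\<bar> \<partial>M) \<le> sqrt A * sqrt B" unfolding A_def[symmetric] B_def[symmetric]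
  proof (cases "A = 0 \<or> B = 0")
    case True
    have "AE x in M. \<bar>a x * b x\<bar> = 0"
    proof (cases "A = 0")
      case True
      then have "AE x in M. (a x)\<^sup>2 = 0" using integral_nonneg_eq_0_iff_AE[OF ai] A_def by auto
      then show ?thesis by eventually_elim simp
    next
      case False
      then have "B = 0" using True by auto
      then have "AE x in M. (b x)\<^sup>2 = 0" using integral_nonneg_eq_0_iff_AE[OF bi] B_def by auto
      then show ?thesis by eventually_elim simp
    qed
    then have "(\<integral>x. \<bar>a x * b x\<bar> \<partial>M) = 0" by (rule integral_eq_zero_AE)
    then show ?thesis using A0 by simp
  next
    case False
    then have p: "A > 0" "B > 0" using A0 by auto
    define t where "t = sqrt B / sqrt A"
    have t: "t > 0" using p unfolding t_def by simp
    have "(t * A + B / t) / 2 = sqrt A * sqrt B"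
      using p unfolding t_def
      by (simp add: field_simps)
    then show ?thesis using bd[OF t] by simp
  qed
qed

lemma W:
  fixes M :: "'a measure" and a b w :: "'a \<Rightarrow> real"
  assumes am: "a \<in> borel_measurable M" and bm: "b \<in> borel_measurable M"
    and ai: "integrable M (\<lambda>x. (a x)\<^sup>2)" and bi: "integrable M (\<lambda>x. (b x)\<^sup>2)"
    and wK: "AE x in M. \<bar>w x\<bar> \<le> K" and K: "K \<ge> 0"
  shows "\<bar>\<integral>x. w x * a x * b x \<partial>M\<bar> \<le> K * (sqrt (\<integral>x. (a x)\<^sup>2 \<partial>M) * sqrt (\<integral>x. (b x)\<^sup>2 \<partial>M))"
proof -
  have "\<bar>\<integral>x. w x * a x * b x \<partial>M\<bar> \<le> (\<integral>x. \<bar>w x * a x * b x\<bar> \<partial>M)" by simp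
  also have "\<dots> \<le> (\<integral>x. K * \<bar>a x * b x\<bar> \<partial>M)"
  proof (rule integral_mono_AE')
    show "integrable M (\<lambda>x. K * \<bar>a x * b x\<bar>)" using CS(1)[OF am bm ai bi] by simp
    show "AE x in M. \<bar>w x * a x * b x\<bar> \<le> K * \<bar>a x * b x\<bar>" using wK
      by eventually_elim (simp add: abs_mult mult.assoc mult_right_mono)
    show "AE x in M. 0 \<le> K * \<bar>a x * b x\<bar>" using K by simp
  qed
  also have "\<dots> = K * (\<integral>x. \<bar>a x * b x\<bar> \<partial>M)" by simp
  also have "\<dots> \<le> K * (sqrt (\<integral>x. (a x)\<^sup>2 \<partial>M) * sqrt (\<integral>x. (b x)\<^sup>2 \<partial>M))"
    using CS(2)[OF am bm ai bi] K by (rule mult_left_mono)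
  finally show ?thesis .
qed

lemma space_Iv: "space (Iv L) = {0<..<L}" by (simp add: space_restrict_space)

lemma emeasure_Iv: "L > 0 \<Longrightarrow> emeasure (Iv L) (space (Iv L)) = ennreal L"
  by (simp add: space_Iv emeasure_restrict_space)

lemma Linf_bound:
  assumes L: "L > 0" and gm: "g \<in> borel_measurable (Iv L)" and gB: "AE x in Iv L. \<bar>g x\<bar> \<le> B"
  shows "AE x in Iv L. \<bar>g x\<bar> \<le> Linf_norm L g" and "0 \<le> Linf_norm L g"
proof -
  define e where "e = esssup (Iv L) (\<lambda>x. ereal \<bar>g x\<bar>)"
  have nb: "ae_filter (Iv L) \<noteq> bot" using emeasure_Iv[OF L] L by (simp add: ae_filter_eq_bot_iff)
  have m: "(\<lambda>x. ereal \<bar>g x\<bar>) \<in> borel_measurable (Iv L)" using gm by measurable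
  have eB: "e \<le> ereal B" unfolding e_def
    apply (rule esssup_I[OF m]) using gB by eventually_elim simp
  have ae: "AE x in Iv L. ereal \<bar>g x\<bar> \<le> e" unfolding e_def by (rule esssup_AE)
  have "AE x in Iv L. 0 \<le> e" using ae by eventually_elim (meson ereal_less_eq(5) abs_ge_zero order_trans)
  then have e0: "0 \<le> e" using eventually_const[OF nb] by simp
  obtain r where r: "e = ereal r" using e0 eB by (cases e) auto
  have "Linf_norm L g = r" unfolding Linf_norm_def e_def[symmetric] r by simp
  then show "0 \<le> Linf_norm L g" using e0 r by simp
  show "AE x in Iv L. \<bar>g x\<bar> \<le> Linf_norm L g" using ae
    by eventually_elim (simp add: r \<open>Linf_norm L g = r\<close>)
qed

lemma LBINT_Iv: "L \<ge> 0 \<Longrightarrow> (LBINT x=0..L. h x) = integral\<^sup>L (Iv L) h"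
  by (simp add: interval_lebesgue_integral_def set_lebesgue_integral_def integral_restrict_space zero_ereal_def)

lemma inV_int: "inV L v g \<Longrightarrow> integrable (Iv L) (\<lambda>x. (g x)\<^sup>2)"
  unfolding inV_def set_integrable_def by (simp add: integrable_restrict_space)

lemma fin_Iv: "L > 0 \<Longrightarrow> finite_measure (Iv L)"
  by (rule finite_measureI) (simp only: emeasure_Iv, simp)

lemma one_Iv: "L > 0 \<Longrightarrow> integrable (Iv L) (\<lambda>x. (1::real)\<^sup>2) \<and> (\<integral>x. (1::real)\<^sup>2 \<partial>Iv L) = L"
proof -
  assume L: "L > 0"
  interpret finite_measure "Iv L" using fin_Iv[OF L] .
  have "measure (Iv L) (space (Iv L)) = L" using emeasure_Iv[OF L] L by (simp add: measure_def)
  then show ?thesis by simp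
qed

lemma u_bound:
  assumes L: "L > 0" and V: "inV L v g" and x: "x \<in> {0<..<L}"
  shows "\<bar>v x\<bar> \<le> sqrt L * sqrt (\<integral>t. (g t)\<^sup>2 \<partial>Iv L)"
proof -
  have gm: "g \<in> borel_measurable (Iv L)" using V unfolding inV_def by simp
  have gi: "integrable (Iv L) (\<lambda>x. (g x)\<^sup>2)" using inV_int[OF V] .
  have om: "(\<lambda>x. 1::real) \<in> borel_measurable (Iv L)" by simp
  have cs1: "integrable (Iv L) (\<lambda>x. \<bar>g x * 1\<bar>)"
    using CS(1)[OF gm om gi conjunct1[OF one_Iv[OF L]]] .
  have cs2: "(\<integral>x. \<bar>g x * 1\<bar> \<partial>Iv L) \<le> sqrt (\<integral>x. (g x)\<^sup>2 \<partial>Iv L) * sqrt L"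
    using CS(2)[OF gm om gi conjunct1[OF one_Iv[OF L]]] one_Iv[OF L] by simp
  have vx: "v x = (LBINT t=0..x. g t)" using V x unfolding inV_def by auto
  also have "\<dots> = (\<integral>t. indicator {0<..<x} t *\<^sub>R g t \<partial>lborel)"
    using x by (simp add: interval_lebesgue_integral_def set_lebesgue_integral_def zero_ereal_def)
  finally have vx: "v x = (\<integral>t. indicator {0<..<x} t *\<^sub>R g t \<partial>lborel)" .
  have "\<bar>v x\<bar> \<le> (\<integral>t. \<bar>indicator {0<..<x} t *\<^sub>R g t\<bar> \<partial>lborel)" unfolding vx by (rule integral_abs_bound)
  also have "\<dots> \<le> (\<integral>t. indicator {0<..<L} t *\<^sub>R \<bar>g t * 1\<bar> \<partial>lborel)"
  proof (rule integral_mono')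
    show "integrable lborel (\<lambda>t. indicator {0<..<L} t *\<^sub>R \<bar>g t * 1\<bar>)"
      using cs1 by (simp add: integrable_restrict_space)
    fix t
    show "\<bar>indicator {0<..<x} t *\<^sub>R g t\<bar> \<le> indicator {0<..<L} t *\<^sub>R \<bar>g t * 1\<bar>"
      using x by (auto simp: indicator_def)
    show "0 \<le> indicator {0<..<L} t *\<^sub>R \<bar>g t * 1\<bar>" by simp
  qed
  also have "\<dots> = (\<integral>x. \<bar>g x * 1\<bar> \<partial>Iv L)" by (simp add: integral_restrict_space)
  also have "\<dots> \<le> sqrt L * sqrt (\<integral>t. (g t)\<^sup>2 \<partial>Iv L)" using cs2 by (simp add: mult.commute)
  finally show ?thesis .
qed

lemma geom: "(\<Sum>j\<in>{1..n}. (2::real)^(n-j)) = 2^n - 1"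
proof (induction n)
  case 0 then show ?case by simp
next
  case (Suc n)
  have "(\<Sum>j\<in>{1..n}. (2::real)^(Suc n-j)) = (\<Sum>j\<in>{1..n}. 2 * 2^(n-j))"
    by (rule sum.cong) (auto simp: Suc_diff_le)
  also have "\<dots> = 2 * (2^n - 1)" using Suc by (simp add: sum_distrib_left[symmetric])
  finally show ?case by (simp add: sum.cl_ivl_Suc)
qed


lemma sq_le: fixes a K :: real assumes "0 \<le> a" "0 \<le> K" "a * a \<le> K * a" shows "a \<le> K"
proof (cases "a = 0")
  case True then show ?thesis using assms by simp
next
  case False then have "a > 0" using assms by simp
  then show ?thesis using assms(3) by (simp add: mult_right_le_imp_le)
qed

lemma aux:
  fixes L :: real and m :: nat and \<kappa> :: "real \<Rightarrow> real" and f :: "real \<Rightarrow> real" and u du :: "nat \<Rightarrow> real \<Rightarrow> real"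
  assumes L: "L > 0"
    and km: "\<kappa> \<in> borel_measurable (Iv L)" and kmin: "0 < \<kappa>min"
      and kae: "AE x in Iv L. \<kappa>min \<le> \<kappa> x \<and> \<kappa> x \<le> \<kappa>max"
      and fL: "in_Linf L f" and V: "\<forall>n. inV L (u n) (du n)"
      and E0: "\<forall>v dv. inV L v dv \<longrightarrow> aj L (\<lambda>x. ln (\<kappa> x)) 0 (du 0) dv = (LBINT x=0..L. f x * v x)"
      and En: "\<forall>n\<ge>1. \<forall>v dv. inV L v dv \<longrightarrow> (\<Sum>j\<le>n. aj L (\<lambda>x. ln (\<kappa> x)) j (du (n - j)) dv) = 0"
  shows "H1_semi L (du m) \<le> (L * sqrt L * 2 ^ m) * Linf_norm L (\<lambda>x. ln (\<kappa> x)) ^ m * Linf_norm L f"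
proof -
  define c where "c = L * sqrt L"
  have c0: "c \<ge> 0" using L unfolding c_def by simp
  define \<psi> where "\<psi> = (\<lambda>x. ln (\<kappa> x))"
  define P where "P = Linf_norm L \<psi>"
  define F where "F = Linf_norm L f"
  define N where "N = (\<lambda>n. sqrt (\<integral>x. (du n x)\<^sup>2 \<partial>Iv L))"
  have dm: "du n \<in> borel_measurable (Iv L)" for n using V unfolding inV_def by simp
  have di: "integrable (Iv L) (\<lambda>x. (du n x)\<^sup>2)" for n using inV_int V by blast
  have N0: "N n \<ge> 0" for n unfolding N_def by simp
  have H1: "H1_semi L (du n) = N n" for n unfolding H1_semi_def N_def using L by (simp add: LBINT_Iv)
  have ajI: "aj L \<psi> j a b = 1 / fact j * (\<integral>x. \<psi> x ^ j * a x * b x \<partial>Iv L)" for j a b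
    unfolding aj_def using L by (simp add: LBINT_Iv)
  have psim: "\<psi> \<in> borel_measurable (Iv L)" unfolding \<psi>_def using km by measurable
  have "AE x in Iv L. \<bar>\<psi> x\<bar> \<le> max \<bar>ln \<kappa>min\<bar> \<bar>ln \<kappa>max\<bar>"
    using kae
  proof eventually_elim
    case (elim x)
    then have "ln \<kappa>min \<le> ln (\<kappa> x)" "ln (\<kappa> x) \<le> ln \<kappa>max" using kmin by auto
    then show ?case unfolding \<psi>_def by linarith
  qed
  from Linf_bound[OF L psim this] have Pae: "AE x in Iv L. \<bar>\<psi> x\<bar> \<le> P" and P0: "P \<ge> 0"
    unfolding P_def by auto
  have fm: "f \<in> borel_measurable (Iv L)" and "\<exists>B. AE x in Iv L. \<bar>f x\<bar> \<le> B"
    using fL unfolding in_Linf_def by auto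
  then obtain B where "AE x in Iv L. \<bar>f x\<bar> \<le> B" by blast
  from Linf_bound[OF L fm this] have Fae: "AE x in Iv L. \<bar>f x\<bar> \<le> F" and F0: "F \<ge> 0"
    unfolding F_def by auto
  have Pjae: "AE x in Iv L. \<bar>\<psi> x ^ j\<bar> \<le> P ^ j" for j
    using Pae by eventually_elim (simp add: power_abs power_mono)
  have key: "N n \<le> c * 2^n * P^n * F" for n
  proof (induction n rule: less_induct)
    case (less n)
    show ?case
    proof (cases "n = 0")
      case True
      have e: "aj L \<psi> 0 (du 0) (du 0) = (LBINT x=0..L. f x * u 0 x)" using E0 V unfolding \<psi>_def by blast
      have lhs: "aj L \<psi> 0 (du 0) (du 0) = (N 0)\<^sup>2"
        unfolding ajI N_def using di[of 0] by (simp add: power2_eq_square)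
      have rhs: "(LBINT x=0..L. f x * u 0 x) = (\<integral>x. f x * u 0 x * 1 * 1 \<partial>Iv L)" using L by (simp add: LBINT_Iv)
      have ae: "AE x in Iv L. \<bar>f x * u 0 x\<bar> \<le> F * (sqrt L * N 0)"
        using Fae AE_space
      proof eventually_elim
        case (elim x)
        then have "x \<in> {0<..<L}" by (simp add: space_Iv)
        from u_bound[OF L V[rule_format, of 0] this] have "\<bar>u 0 x\<bar> \<le> sqrt L * N 0" unfolding N_def .
        then show ?case using elim F0 by (simp add: abs_mult mult_mono)
      qed
      have om: "(\<lambda>x. 1::real) \<in> borel_measurable (Iv L)" by simp
      have "\<bar>\<integral>x. f x * u 0 x * 1 * 1 \<partial>Iv L\<bar> \<le> F * (sqrt L * N 0) * (sqrt (\<integral>x. (1::real)\<^sup>2 \<partial>Iv L) * sqrt (\<integral>x. (1::real)\<^sup>2 \<partial>Iv L))"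
        by (rule W[OF om om conjunct1[OF one_Iv[OF L]] conjunct1[OF one_Iv[OF L]] ae]) (use F0 N0 L in simp)
      also have "\<dots> = F * (sqrt L * N 0) * L" using one_Iv[OF L] L by simp
      finally have "(N 0)\<^sup>2 \<le> F * (sqrt L * N 0) * L" using e lhs rhs by simp
      then have "N 0 * N 0 \<le> (c * F) * N 0" unfolding c_def by (simp add: power2_eq_square algebra_simps)
      then have "N 0 \<le> c * F"
        using sq_le[OF N0, of "c * F"] c0 F0 by simp
      then show ?thesis using True by simp
    next
      case False
      then have n1: "n \<ge> 1" by simp
      have e: "(\<Sum>j\<le>n. aj L \<psi> j (du (n - j)) (du n)) = 0" using En n1 V unfolding \<psi>_def by blast
      have split: "{..n} = insert 0 {1..n}" by auto
      have t0: "aj L \<psi> 0 (du n) (du n) = (N n)\<^sup>2"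
        unfolding ajI N_def using di[of n] by (simp add: power2_eq_square)
      have eq: "(N n)\<^sup>2 = - (\<Sum>j\<in>{1..n}. aj L \<psi> j (du (n - j)) (du n))"
        using e t0 unfolding split by (simp add: sum.insert)
      have tb: "\<bar>aj L \<psi> j (du (n - j)) (du n)\<bar> \<le> c * F * N n * P^n * 2^(n-j)" if j: "j \<in> {1..n}" for j
      proof -
        have w: "\<bar>\<integral>x. \<psi> x ^ j * du (n-j) x * du n x \<partial>Iv L\<bar> \<le> P^j * (N (n-j) * N n)"
          unfolding N_def by (rule W[OF dm dm di di Pjae]) (use P0 in simp)
        have fj: "1 / fact j \<le> (1::real)" by simp
        have "\<bar>aj L \<psi> j (du (n - j)) (du n)\<bar> = 1 / fact j * \<bar>\<integral>x. \<psi> x ^ j * du (n-j) x * du n x \<partial>Iv L\<bar>"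
          unfolding ajI by (simp add: abs_mult)
        also have "\<dots> \<le> 1 * (P^j * (N (n-j) * N n))"
          by (rule mult_mono[OF fj w]) auto
        also have "\<dots> \<le> P^j * ((c * 2^(n-j) * P^(n-j) * F) * N n)"
          proof -
            have "N (n-j) \<le> c * 2^(n-j) * P^(n-j) * F" using less[of "n-j"] j by auto
            from mult_left_mono[OF mult_right_mono[OF this N0[of n]] zero_le_power[OF P0, of j]]
            show ?thesis by simp
          qed
        also have "\<dots> = c * F * N n * (P^j * P^(n-j)) * 2^(n-j)" by (simp only: ac_simps)
        also have "\<dots> = c * F * N n * P^n * 2^(n-j)" using j by (simp flip: power_add)
        finally show ?thesis .
      qed
      have "(N n)\<^sup>2 \<le> (\<Sum>j\<in>{1..n}. \<bar>aj L \<psi> j (du (n - j)) (du n)\<bar>)"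
        unfolding eq by (rule order_trans[OF abs_ge_minus_self sum_abs])
      also have "\<dots> \<le> (\<Sum>j\<in>{1..n}. c * F * N n * P^n * 2^(n-j))"
        by (rule sum_mono) (rule tb)
      also have "\<dots> = c * F * N n * P^n * (2^n - 1)"
        by (simp only: sum_distrib_left[symmetric] geom)
      also have "\<dots> \<le> c * F * N n * P^n * 2^n"
        using c0 F0 N0[of n] P0 by (intro mult_left_mono) auto
      finally have "N n * N n \<le> (c * 2^n * P^n * F) * N n" by (simp add: power2_eq_square algebra_simps)
      then show ?thesis
        using sq_le[OF N0, of "c * 2^n * P^n * F"] c0 F0 P0 by simp
    qed
  qed
  show ?thesis
    using key[of m] unfolding H1 P_def F_def \<psi>_def c_def .
qed

theorem lemma5:
  fixes L :: real
  assumes "L > 0"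
  shows "\<forall>m::nat. \<exists>C::real. \<forall>(\<kappa>::real \<Rightarrow> real) \<kappa>min \<kappa>max (f::real \<Rightarrow> real)
            (u::nat \<Rightarrow> real \<Rightarrow> real) (du::nat \<Rightarrow> real \<Rightarrow> real).
     (\<kappa> \<in> borel_measurable (Iv L) \<and> 0 < \<kappa>min \<and>
      (AE x in Iv L. \<kappa>min \<le> \<kappa> x \<and> \<kappa> x \<le> \<kappa>max) \<and>
      in_Linf L f \<and>
      (\<forall>n. inV L (u n) (du n)) \<and>
      (\<forall>v dv. inV L v dv \<longrightarrow>
          aj L (\<lambda>x. ln (\<kappa> x)) 0 (du 0) dv = (LBINT x=0..L. f x * v x)) \<and>
      (\<forall>n\<ge>1. \<forall>v dv. inV L v dv \<longrightarrow>
          (\<Sum>j\<le>n. aj L (\<lambda>x. ln (\<kappa> x)) j (du (n - j)) dv) = 0))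
     \<longrightarrow> H1_semi L (du m) \<le> C * (Linf_norm L (\<lambda>x. ln (\<kappa> x))) ^ m * Linf_norm L f"
  apply (intro allI)
  subgoal for m
    apply (rule exI[of _ "L * sqrt L * 2^m"])
    apply (intro allI impI, elim conjE)
    apply (rule aux[OF assms])
    by assumption+
  done

end
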